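(* Let $\rho_S$ be a symmetric state on $\mathbb{C}^3\otimes\mathbb{C}^3$ of the form $$\rho_S=\sum_{0\le i\le j\le 2}p_{ij}\,|D_{ij}\rangle\langle D_{ij}| \;+\;\big(\alpha\,|D_{11}\rangle\langle D_{02}| + \alpha^*\,|D_{02}\rangle\langle D_{11}|\big),$$ with $p_{ij}\ge0$, $\sum p_{ij}=1$, whose coefficients satisfy $p_{11}=2p_{02}=\sqrt{2}\,\alpha$. Then $\rho_S$ is separable if and only if it is PPT.
   Context: The two-qutrit Dicke states are $|D_{ii}\rangle=|ii\rangle$ and $|D_{ij}\rangle=(|ij\rangle+|ji\rangle)/\sqrt2$ for $i\ne j$, with $\{|0\rangle,|1\rangle,|2\rangle\}$ the computational basis of $\mathbb{C}^3$. Separable means a convex combination of product states $|a\rangle\langle a|\otimes|b\rangle\langle b|$; PPT means the partial transpose with respect to one subsystem is positive semidefinite. *)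

theory Defs
  imports Complex_Main "HOL-Library.Numeral_Type"
begin

text \<open>Two-qutrit operators: a qutrit basis is indexed by the finite type 3 = {0,1,2};
  an operator on C^3 (x) C^3 is a function on pairs of basis indices (3 \<times> 3).\<close>

type_synonym ket9 = "3 \<times> 3 \<Rightarrow> complex"
type_synonym op9 = "3 \<times> 3 \<Rightarrow> 3 \<times> 3 \<Rightarrow> complex"

definition dicke :: "3 \<Rightarrow> 3 \<Rightarrow> ket9" where
  "dicke i j = (\<lambda>(a, b).
     if i = j then (if a = i \<and> b = i then 1 else 0)
     else (if (a = i \<and> b = j) \<or> (a = j \<and> b = i) then 1 / complex_of_real (sqrt 2) else 0))"

definition outer :: "ket9 \<Rightarrow> ket9 \<Rightarrow> op9" where
  "outer u v = (\<lambda>x y. u x * cnj (v y))"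

definition psd :: "op9 \<Rightarrow> bool" where
  "psd M \<longleftrightarrow> (\<forall>x y. M y x = cnj (M x y)) \<and>
     (\<forall>v :: ket9. 0 \<le> Re (\<Sum>x\<in>UNIV. \<Sum>y\<in>UNIV. cnj (v x) * M x y * v y))"

definition trace9 :: "op9 \<Rightarrow> complex" where
  "trace9 M = (\<Sum>x\<in>UNIV. M x x)"

definition is_state :: "op9 \<Rightarrow> bool" where
  "is_state M \<longleftrightarrow> psd M \<and> trace9 M = 1"

definition partial_transpose :: "op9 \<Rightarrow> op9" where
  "partial_transpose M = (\<lambda>(a, b) (c, d). M (a, d) (c, b))"

definition PPT :: "op9 \<Rightarrow> bool" where
  "PPT M \<longleftrightarrow> psd (partial_transpose M)"

definition unit3 :: "(3 \<Rightarrow> complex) \<Rightarrow> bool" where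
  "unit3 a \<longleftrightarrow> (\<Sum>x\<in>UNIV. (cmod (a x))\<^sup>2) = 1"

definition prod_state :: "(3 \<Rightarrow> complex) \<Rightarrow> (3 \<Rightarrow> complex) \<Rightarrow> op9" where
  "prod_state a b = (\<lambda>(x1, x2) (y1, y2). a x1 * cnj (a y1) * (b x2 * cnj (b y2)))"

definition separable :: "op9 \<Rightarrow> bool" where
  "separable M \<longleftrightarrow> (\<exists>(K::nat) (w::nat \<Rightarrow> real) (a::nat \<Rightarrow> 3 \<Rightarrow> complex) (b::nat \<Rightarrow> 3 \<Rightarrow> complex).
     (\<forall>k<K. 0 \<le> w k \<and> unit3 (a k) \<and> unit3 (b k)) \<and> (\<Sum>k<K. w k) = 1 \<and>
     M = (\<lambda>x y. \<Sum>k<K. complex_of_real (w k) * prod_state (a k) (b k) x y))"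

definition upper_pairs :: "(3 \<times> 3) set" where
  "upper_pairs = {(0,0), (0,1), (0,2), (1,1), (1,2), (2,2)}"

definition rhoS :: "(3 \<Rightarrow> 3 \<Rightarrow> real) \<Rightarrow> complex \<Rightarrow> op9" where
  "rhoS p \<alpha> = (\<lambda>x y.
     (\<Sum>(i, j)\<in>upper_pairs. complex_of_real (p i j) * outer (dicke i j) (dicke i j) x y)
     + \<alpha> * outer (dicke 1 1) (dicke 0 2) x y
     + cnj \<alpha> * outer (dicke 0 2) (dicke 1 1) x y)"

end

theory Submission
  imports Defs
begin

lemma ex3: "(x::3) = 0 \<or> x = 1 \<or> x = 2"
proof (cases x)
  case (of_int z)
  then have "z = 0 \<or> z = 1 \<or> z = 2" by auto
  then show ?thesis using of_int by auto
qed

lemma UNIV3: "(UNIV::3 set) = {0,1,2}" using ex3 by auto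

lemma neq3[simp]: "(0::3) \<noteq> 1" "(1::3) \<noteq> 0" "(0::3) \<noteq> 2" "(2::3) \<noteq> 0" "(1::3) \<noteq> 2" "(2::3) \<noteq> 1"
  by simp_all

lemma sum3: "(\<Sum>x\<in>(UNIV::3 set). f x) = f 0 + f 1 + f 2"
  unfolding UNIV3 by (simp add: add.assoc)

definition sepc :: "op9 \<Rightarrow> bool" where
  "sepc M \<longleftrightarrow> (\<exists>L::(real \<times> (3\<Rightarrow>complex) \<times> (3\<Rightarrow>complex)) list.
     (\<forall>(w,a,b)\<in>set L. 0 \<le> w) \<and>
     M = (\<lambda>x y. \<Sum>(w,a,b)\<leftarrow>L. complex_of_real w * prod_state a b x y))"

lemma sepc_add:
  assumes "sepc M" "sepc N" shows "sepc (\<lambda>x y. M x y + N x y)"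
proof -
  obtain L1 where "(\<forall>(w,a,b)\<in>set L1. 0 \<le> w) \<and> M = (\<lambda>x y. \<Sum>(w,a,b)\<leftarrow>L1. complex_of_real w * prod_state a b x y)"
    using assms(1) unfolding sepc_def by (rule exE)
  note L1 = conjunct1[OF this] conjunct2[OF this]
  obtain L2 where "(\<forall>(w,a,b)\<in>set L2. 0 \<le> w) \<and> N = (\<lambda>x y. \<Sum>(w,a,b)\<leftarrow>L2. complex_of_real w * prod_state a b x y)"
    using assms(2) unfolding sepc_def by (rule exE)
  note L2 = conjunct1[OF this] conjunct2[OF this]
  have 1: "\<forall>(w,a,b)\<in>set (L1 @ L2). 0 \<le> w" using L1(1) L2(1) by auto
  have 2: "(\<lambda>x y. M x y + N x y) = (\<lambda>x y. \<Sum>(w,a,b)\<leftarrow>L1 @ L2. complex_of_real w * prod_state a b x y)"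
    unfolding L1(2) L2(2) by simp
  show ?thesis unfolding sepc_def using 1 2 by (intro exI conjI)
qed

lemma sum_list_cmult: "c * sum_list (map f L) = sum_list (map (\<lambda>x. c * f x) L)" for c :: complex
  by (induction L) (auto simp: distrib_left)

lemma sepc_scale:
  assumes "sepc M" "0 \<le> c" shows "sepc (\<lambda>x y. complex_of_real c * M x y)"
proof -
  obtain L where "(\<forall>(w,a,b)\<in>set L. 0 \<le> w) \<and> M = (\<lambda>x y. \<Sum>(w,a,b)\<leftarrow>L. complex_of_real w * prod_state a b x y)"
    using assms(1) unfolding sepc_def by (rule exE)
  note L = conjunct1[OF this] conjunct2[OF this]
  let ?L = "map (\<lambda>(w,a,b). (c*w,a,b)) L"
  have 1: "\<forall>(w,a,b)\<in>set ?L. 0 \<le> w" using L(1) assms(2) by auto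
  have 2: "(\<lambda>x y. complex_of_real c * M x y) = (\<lambda>x y. \<Sum>(w,a,b)\<leftarrow>?L. complex_of_real w * prod_state a b x y)"
    unfolding L(2) by (simp add: case_prod_unfold o_def sum_list_cmult mult.assoc)
  show ?thesis unfolding sepc_def using 1 2 by (intro exI conjI)
qed

lemma sepc_sum:
  fixes K :: nat
  assumes "\<forall>k<K. 0 \<le> w k"
  shows "sepc (\<lambda>x y. \<Sum>k<K. complex_of_real (w k) * prod_state (a k) (b k) x y)"
proof -
  let ?L = "map (\<lambda>k. (w k, a k, b k)) [0..<K]"
  have 1: "\<forall>(w,a,b)\<in>set ?L. 0 \<le> w" using assms by auto
  have 2: "(\<lambda>x y. \<Sum>k<K. complex_of_real (w k) * prod_state (a k) (b k) x y)
      = (\<lambda>x y. \<Sum>(w,a,b)\<leftarrow>?L. complex_of_real w * prod_state a b x y)"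
    by (simp add: o_def interv_sum_list_conv_sum_set_nat atLeast0LessThan)
  show ?thesis unfolding sepc_def using 1 2 by (intro exI conjI)
qed


lemma sum33: "(\<Sum>x\<in>(UNIV::(3\<times>3) set). f x) = (\<Sum>a\<in>UNIV. \<Sum>b\<in>UNIV. f (a,b))"
  by (simp add: sum.cartesian_product flip: UNIV_Times_UNIV)

definition nrm :: "(3\<Rightarrow>complex) \<Rightarrow> real" where
  "nrm a = (\<Sum>x\<in>UNIV. (cmod (a x))\<^sup>2)"

definition nz :: "(3\<Rightarrow>complex) \<Rightarrow> (3\<Rightarrow>complex)" where
  "nz a = (if nrm a = 0 then (\<lambda>x. if x = 0 then 1 else 0) else (\<lambda>x. a x / complex_of_real (sqrt (nrm a))))"

lemma nrm_nonneg: "0 \<le> nrm a"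
  unfolding nrm_def by (simp add: sum_nonneg)

lemma nrm_zero: "nrm a = 0 \<Longrightarrow> a x = 0"
  unfolding nrm_def by (subst (asm) sum_nonneg_eq_0_iff) auto

lemma unit_nz: "unit3 (nz a)"
proof (cases "nrm a = 0")
  case True
  then show ?thesis by (simp add: nz_def unit3_def sum3)
next
  case False
  then have pos: "0 < nrm a" using nrm_nonneg[of a] by linarith
  have "(\<Sum>x\<in>UNIV. (cmod (nz a x))\<^sup>2) = (\<Sum>x\<in>UNIV. (cmod (a x))\<^sup>2 / nrm a)"
    using False pos unfolding nz_def by (simp add: norm_divide power_divide)
  also have "\<dots> = nrm a / nrm a" unfolding sum_divide_distrib[symmetric] by (simp add: nrm_def)
  also have "\<dots> = 1" using pos by simp
  finally show ?thesis unfolding unit3_def .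
qed

lemma ps_nz: "complex_of_real w * prod_state a b x y
   = complex_of_real (w * nrm a * nrm b) * prod_state (nz a) (nz b) x y"
proof (cases "nrm a = 0 \<or> nrm b = 0")
  case True
  then show ?thesis
    by (cases x, cases y) (auto simp: prod_state_def nrm_zero)
next
  case False
  then have pa: "0 < nrm a" and pb: "0 < nrm b" using nrm_nonneg[of a] nrm_nonneg[of b] by linarith+
  have sa: "complex_of_real (nrm a) = complex_of_real (sqrt (nrm a)) * complex_of_real (sqrt (nrm a))"
    using pa by (simp flip: of_real_mult)
  have sb: "complex_of_real (nrm b) = complex_of_real (sqrt (nrm b)) * complex_of_real (sqrt (nrm b))"
    using pb by (simp flip: of_real_mult)
  have na: "complex_of_real (sqrt (nrm a)) \<noteq> 0" and nb: "complex_of_real (sqrt (nrm b)) \<noteq> 0"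
    using pa pb by auto
  show ?thesis using False na nb
    by (cases x, cases y) (simp add: prod_state_def nz_def sa sb field_simps)
qed

lemma sum_cnj_unit: "unit3 a \<Longrightarrow> (\<Sum>x\<in>UNIV. a x * cnj (a x)) = 1"
proof -
  assume u: "unit3 a"
  have "(\<Sum>x\<in>UNIV. a x * cnj (a x)) = complex_of_real (\<Sum>x\<in>UNIV. (cmod (a x))\<^sup>2)"
    by (simp add: of_real_sum complex_mult_cnj cmod_power2 del: of_real_power)
  then show ?thesis using u unfolding unit3_def by simp
qed

lemma trace_ps: "unit3 a \<Longrightarrow> unit3 b \<Longrightarrow> trace9 (prod_state a b) = 1"
proof -
  assume ua: "unit3 a" and ub: "unit3 b"
  have "trace9 (prod_state a b) = (\<Sum>x1\<in>UNIV. \<Sum>x2\<in>UNIV. (a x1 * cnj (a x1)) * (b x2 * cnj (b x2)))"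
    unfolding trace9_def sum33 by (simp add: prod_state_def)
  also have "\<dots> = (\<Sum>x1\<in>UNIV. a x1 * cnj (a x1)) * (\<Sum>x2\<in>UNIV. b x2 * cnj (b x2))"
    by (simp add: sum_product)
  also have "\<dots> = 1" using ua ub by (simp add: sum_cnj_unit)
  finally show ?thesis .
qed

lemma sep_of_sepc:
  assumes st: "is_state M" and sc: "sepc M"
  shows "separable M"
proof -
  obtain L where "(\<forall>(w,a,b)\<in>set L. 0 \<le> w) \<and> M = (\<lambda>x y. \<Sum>(w,a,b)\<leftarrow>L. complex_of_real w * prod_state a b x y)"
    using sc unfolding sepc_def by (rule exE)
  note L = conjunct1[OF this] conjunct2[OF this]
  define K where "K = length L"
  define w' where "w' k = fst (L!k) * nrm (fst (snd (L!k))) * nrm (snd (snd (L!k)))" for k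
  define a' where "a' k = nz (fst (snd (L!k)))" for k
  define b' where "b' k = nz (snd (snd (L!k)))" for k
  have wpos: "\<forall>k<K. 0 \<le> w' k \<and> unit3 (a' k) \<and> unit3 (b' k)"
  proof (intro allI impI conjI)
    fix k assume "k < K"
    then have "L!k \<in> set L" unfolding K_def by simp
    then have "0 \<le> fst (L!k)" using L(1) by (auto simp: case_prod_unfold)
    then show "0 \<le> w' k" unfolding w'_def by (simp add: nrm_nonneg)
    show "unit3 (a' k)" "unit3 (b' k)" unfolding a'_def b'_def by (rule unit_nz)+
  qed
  have Meq: "M = (\<lambda>x y. \<Sum>k<K. complex_of_real (w' k) * prod_state (a' k) (b' k) x y)"
  proof (intro ext)
    fix x y
    have "M x y = (\<Sum>k<K. (\<lambda>(w,a,b). complex_of_real w * prod_state a b x y) (L!k))"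
      unfolding L(2) K_def by (simp add: sum_list_sum_nth atLeast0LessThan)
    also have "\<dots> = (\<Sum>k<K. complex_of_real (w' k) * prod_state (a' k) (b' k) x y)"
      by (rule sum.cong) (auto simp: case_prod_unfold w'_def a'_def b'_def ps_nz)
    finally show "M x y = (\<Sum>k<K. complex_of_real (w' k) * prod_state (a' k) (b' k) x y)" .
  qed
  have "1 = trace9 M" using st unfolding is_state_def by simp
  also have "\<dots> = (\<Sum>k<K. complex_of_real (w' k) * trace9 (prod_state (a' k) (b' k)))"
    unfolding Meq trace9_def by (simp add: sum_distrib_left sum.swap[of _ UNIV])
  also have "\<dots> = (\<Sum>k<K. complex_of_real (w' k))"
    using wpos by (intro sum.cong) (auto simp: trace_ps)
  finally have "(\<Sum>k<K. w' k) = 1" by (metis of_real_eq_1_iff of_real_sum)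
  then show ?thesis unfolding separable_def using wpos Meq by blast
qed

lemma psd_sum:
  fixes K :: nat
  assumes "\<forall>k<K. 0 \<le> w k"
  shows "psd (\<lambda>x y. \<Sum>k<K. complex_of_real (w k) * (f k x * cnj (f k y)))"
  unfolding psd_def
proof (intro conjI allI)
  fix x y
  show "(\<Sum>k<K. complex_of_real (w k) * (f k y * cnj (f k x))) =
        cnj (\<Sum>k<K. complex_of_real (w k) * (f k x * cnj (f k y)))"
    by (simp add: mult.commute)
next
  fix v :: ket9
  define T where "T k = (\<Sum>y\<in>UNIV. cnj (f k y) * v y)" for k
  have "(\<Sum>x\<in>UNIV. \<Sum>y\<in>UNIV. cnj (v x) * (\<Sum>k<K. complex_of_real (w k) * (f k x * cnj (f k y))) * v y)
     = (\<Sum>x\<in>UNIV. \<Sum>y\<in>UNIV. \<Sum>k<K. complex_of_real (w k) * ((cnj (v x) * f k x) * (cnj (f k y) * v y)))"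
    by (simp add: sum_distrib_left sum_distrib_right mult_ac)
  also have "\<dots> = (\<Sum>k<K. \<Sum>x\<in>UNIV. \<Sum>y\<in>UNIV. complex_of_real (w k) * ((cnj (v x) * f k x) * (cnj (f k y) * v y)))"
    by (simp add: sum.swap[of _ "{..<K}"])
  also have "\<dots> = (\<Sum>k<K. complex_of_real (w k) * ((\<Sum>x\<in>UNIV. cnj (v x) * f k x) * (\<Sum>y\<in>UNIV. cnj (f k y) * v y)))"
    by (rule sum.cong[OF refl], subst sum_product) (simp add: sum_distrib_left)
  also have "\<dots> = (\<Sum>k<K. complex_of_real (w k * (cmod (T k))\<^sup>2))"
  proof (rule sum.cong)
    fix k
    have "(\<Sum>x\<in>UNIV. cnj (v x) * f k x) = cnj (T k)" by (simp add: T_def mult.commute)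
    then show "complex_of_real (w k) * ((\<Sum>x\<in>UNIV. cnj (v x) * f k x) * (\<Sum>y\<in>UNIV. cnj (f k y) * v y))
        = complex_of_real (w k * (cmod (T k))\<^sup>2)"
    proof -
      have h2: "(\<Sum>y\<in>UNIV. cnj (f k y) * v y) = T k" by (simp add: T_def)
      show ?thesis unfolding h2 \<open>(\<Sum>x\<in>UNIV. cnj (v x) * f k x) = cnj (T k)\<close>
        by (simp add: complex_norm_square mult.commute del: of_real_power)
    qed
  qed simp
  finally have eq: "(\<Sum>x\<in>UNIV. \<Sum>y\<in>UNIV. cnj (v x) * (\<Sum>k<K. complex_of_real (w k) * (f k x * cnj (f k y))) * v y)
      = complex_of_real (\<Sum>k<K. w k * (cmod (T k))\<^sup>2)" by (simp add: of_real_sum)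
  have "0 \<le> (\<Sum>k<K. w k * (cmod (T k))\<^sup>2)" using assms by (intro sum_nonneg) auto
  then show "0 \<le> Re (\<Sum>x\<in>UNIV. \<Sum>y\<in>UNIV. cnj (v x) * (\<Sum>k<K. complex_of_real (w k) * (f k x * cnj (f k y))) * v y)"
    unfolding eq by simp
qed

lemma ppt_of_sep:
  assumes "separable M" shows "PPT M"
proof -
  obtain K w a b where H: "\<forall>k<K. 0 \<le> w k \<and> unit3 (a k) \<and> unit3 (b k)" 
    and M: "M = (\<lambda>x y. \<Sum>k<(K::nat). complex_of_real (w k) * prod_state (a k) (b k) x y)"
    using assms unfolding separable_def by blast
  define f where "f k = (\<lambda>(x1::3, x2::3). a k x1 * cnj (b k x2))" for k
  have "partial_transpose M = (\<lambda>x y. \<Sum>k<K. complex_of_real (w k) * (f k x * cnj (f k y)))"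
    unfolding M partial_transpose_def f_def prod_state_def
    by (intro ext) (auto simp: case_prod_unfold mult_ac)
  moreover have "psd (\<lambda>x y. \<Sum>k<K. complex_of_real (w k) * (f k x * cnj (f k y)))"
    using H by (intro psd_sum) auto
  ultimately show ?thesis unfolding PPT_def by simp
qed
lemma sum_upper: "(\<Sum>(i, j)\<in>upper_pairs. f i j) = f 0 0 + f 0 1 + f 0 2 + f 1 1 + f 1 2 + f 2 2"
  by (simp add: upper_pairs_def add.assoc)

definition om :: complex where "om = cis (pi / 4)"

lemma om_sum:
  fixes m n :: nat
  assumes "m \<le> 4" "n \<le> 4"
  shows "(\<Sum>k<8::nat. (om^k)^m * cnj (om^k)^n) = (if m = n then 8 else 0)"
proof -
  define \<theta> where "\<theta> = (real m - real n) * pi / 4"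
  have trm: "(om^k)^m * cnj (om^k)^n = cis \<theta> ^ k" for k :: nat
  proof -
    have "(om^k)^m * cnj (om^k)^n = cis (real (k*m) * (pi/4)) * cis (- (real (k*n) * (pi/4)))"
      by (simp add: om_def DeMoivre cis_cnj power_mult[symmetric] mult_ac)
    also have "\<dots> = cis (real k * \<theta>)"
      by (simp add: cis_mult \<theta>_def algebra_simps diff_divide_distrib)
    also have "\<dots> = cis \<theta> ^ k" by (simp add: DeMoivre)
    finally show ?thesis .
  qed
  show ?thesis
  proof (cases "m = n")
    case True
    show ?thesis unfolding trm using True by (simp add: \<theta>_def)
  next
    case False
    have z8: "cis \<theta> ^ 8 = 1"
    proof -
      have "cis \<theta> ^ 8 = cis (2 * pi * (real m - real n))"
        unfolding DeMoivre \<theta>_def by (rule arg_cong[where f=cis]) (simp add: field_simps)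
      also have "\<dots> = 1" by (rule cis_multiple_2pi) auto
      finally show ?thesis .
    qed
    have z1: "cis \<theta> \<noteq> 1"
    proof
      assume "cis \<theta> = 1"
      then have "cos \<theta> = 1" by (metis Re_complex_of_real complex_of_real_def cis.sel(1) one_complex.sel(1))
      then obtain j :: int where j: "\<theta> = real_of_int j * 2 * pi" using cos_one_2pi_int by auto
      have "j \<noteq> 0" using j False unfolding \<theta>_def by auto
      then have "\<bar>real_of_int j\<bar> \<ge> 1" by linarith
      then have "\<bar>\<theta>\<bar> \<ge> 2 * pi" unfolding j using pi_gt_zero
        by (simp add: abs_mult)
      moreover have "\<bar>\<theta>\<bar> \<le> pi" unfolding \<theta>_def using assms pi_gt_zero
        by (simp add: abs_mult)
      ultimately show False using pi_gt_zero by linarith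
    qed
    have "(\<Sum>k<8::nat. (om^k)^m * cnj (om^k)^n) = (\<Sum>k<8::nat. cis \<theta> ^ k)" by (simp only: trm)
    also have "\<dots> = 0" using z1 z8 by (simp add: geometric_sum)
    finally show ?thesis using False by simp
  qed
qed


definition idx :: "3 \<Rightarrow> nat" where "idx a = (if a = 0 then 0 else if a = 1 then 1 else 2)"
definition gg :: "3 \<Rightarrow> real" where "gg a = (if a = 1 then sqrt 2 else 1)"
definition sig :: "3 \<times> 3 \<Rightarrow> nat" where "sig x = idx (fst x) + idx (snd x)"
definition gw :: "3 \<times> 3 \<Rightarrow> real" where "gw x = gg (fst x) * gg (snd x)"

definition vk :: "real \<Rightarrow> nat \<Rightarrow> 3 \<Rightarrow> complex" where
  "vk r k a = complex_of_real (gg a * r ^ idx a) * (om ^ k) ^ idx a"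

definition G :: "real \<Rightarrow> op9" where
  "G r x y = complex_of_real (if sig x = sig y then gw x * gw y * r ^ (2 * sig x) else 0)"

lemma idx_le: "idx a \<le> 2" by (simp add: idx_def)
lemma sig_le: "sig x \<le> 4" using idx_le[of "fst x"] idx_le[of "snd x"] by (simp add: sig_def)

lemma G_eq: "G r x y = (\<Sum>k<8. complex_of_real (1/8) * prod_state (vk r k) (vk r k) x y)"
proof -
  obtain a b c d where xy: "x = (a,b)" "y = (c,d)" by (cases x, cases y) auto
  define P where "P = gw x * gw y * r ^ (sig x + sig y)"
  have ps: "prod_state (vk r k) (vk r k) x y = complex_of_real P * ((om^k)^(sig x) * cnj (om^k)^(sig y))" for k
    unfolding xy P_def
    by (simp add: prod_state_def vk_def gw_def sig_def power_add mult_ac)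
  have "(\<Sum>k<8. complex_of_real (1/8) * prod_state (vk r k) (vk r k) x y)
     = complex_of_real (1/8) * complex_of_real P * (\<Sum>k<8::nat. (om^k)^(sig x) * cnj (om^k)^(sig y))"
    unfolding ps by (simp add: sum_distrib_left mult_ac)
  also have "\<dots> = complex_of_real (1/8) * complex_of_real P * (if sig x = sig y then 8 else 0)"
    using om_sum[OF sig_le sig_le] by simp
  also have "\<dots> = G r x y"
    by (simp add: G_def P_def mult_2 flip: of_real_mult)
  finally show ?thesis by simp
qed


definition cc :: "(3 \<Rightarrow> 3 \<Rightarrow> real) \<Rightarrow> nat \<Rightarrow> real" where
  "cc p n = (if n = 0 then p 0 0 else if n = 1 then p 0 1 / 4 else if n = 2 then p 0 2 / 2
     else if n = 3 then p 1 2 / 4 else p 2 2)"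

lemma s2: "complex_of_real (sqrt 2) * complex_of_real (sqrt 2) = 2"
  by (simp flip: of_real_mult)

lemma rho_formula:
  assumes "p 1 1 = 2 * p 0 2" and "\<alpha> = complex_of_real (sqrt 2 * p 0 2)"
  shows "rhoS p \<alpha> (a,b) (c,d) = complex_of_real (if sig (a,b) = sig (c,d) then gw (a,b) * gw (c,d) * cc p (sig (a,b)) else 0)"
  using ex3[of a] ex3[of b] ex3[of c] ex3[of d]
  apply (elim disjE)
  apply (simp_all add: rhoS_def sum_upper outer_def dicke_def sig_def gw_def gg_def idx_def cc_def assms s2)
  done

definition e2 :: "3 \<Rightarrow> complex" where "e2 a = (if a = 2 then 1 else 0)"

lemma E22_formula:
  "prod_state e2 e2 (a,b) (c,d) = complex_of_real (if sig (a,b) = sig (c,d) \<and> sig (a,b) = 4 then gw (a,b) * gw (c,d) else 0)"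
  using ex3[of a] ex3[of b] ex3[of c] ex3[of d]
  apply (elim disjE)
  apply (simp_all add: prod_state_def e2_def sig_def gw_def gg_def idx_def)
  done

lemma qfH:
  assumes "p 1 1 = 2 * p 0 2" and "\<alpha> = complex_of_real (sqrt 2 * p 0 2)"
    and "psd (partial_transpose (rhoS p \<alpha>))"
  shows "0 \<le> cc p 0 * x^2 + cc p 2 * y^2 + cc p 4 * z^2 + 2 * cc p 1 * x * y + 2 * cc p 2 * x * z + 2 * cc p 3 * y * z"
proof -
  define v :: ket9 where "v = (\<lambda>(a,b). if a = b then complex_of_real (if a = 0 then x else if a = 1 then y / 2 else z) else 0)"
  have "0 \<le> Re (\<Sum>i\<in>UNIV. \<Sum>j\<in>UNIV. cnj (v i) * partial_transpose (rhoS p \<alpha>) i j * v j)"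
    using assms(3) unfolding psd_def by blast
  also have "Re (\<Sum>i\<in>UNIV. \<Sum>j\<in>UNIV. cnj (v i) * partial_transpose (rhoS p \<alpha>) i j * v j)
     = cc p 0 * x^2 + cc p 2 * y^2 + cc p 4 * z^2 + 2 * cc p 1 * x * y + 2 * cc p 2 * x * z + 2 * cc p 3 * y * z"
    by (simp add: sum33 sum3 partial_transpose_def rho_formula[OF assms(1,2)] v_def sig_def gw_def gg_def idx_def
        cc_def algebra_simps power2_eq_square)
  finally show ?thesis .
qed

lemma qfB:
  assumes "p 1 1 = 2 * p 0 2" and "\<alpha> = complex_of_real (sqrt 2 * p 0 2)"
    and "psd (partial_transpose (rhoS p \<alpha>))"
  shows "0 \<le> cc p 1 * x^2 + 2 * cc p 2 * x * y + cc p 3 * y^2"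
proof -
  define v :: ket9 where "v = (\<lambda>(a,b). if a = 0 \<and> b = 1 then complex_of_real x else if a = 1 \<and> b = 2 then complex_of_real y else 0)"
  have "0 \<le> Re (\<Sum>i\<in>UNIV. \<Sum>j\<in>UNIV. cnj (v i) * partial_transpose (rhoS p \<alpha>) i j * v j)"
    using assms(3) unfolding psd_def by blast
  also have "Re (\<Sum>i\<in>UNIV. \<Sum>j\<in>UNIV. cnj (v i) * partial_transpose (rhoS p \<alpha>) i j * v j)
     = 2 * (cc p 1 * x^2 + 2 * cc p 2 * x * y + cc p 3 * y^2)"
    by (simp add: sum33 sum3 partial_transpose_def rho_formula[OF assms(1,2)] v_def sig_def gw_def gg_def idx_def
        cc_def algebra_simps power2_eq_square)
  finally show ?thesis by simp
qed

lemma lin_zero: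
  fixes \<beta> \<gamma> :: real
  assumes "\<forall>t. 0 \<le> \<beta> * t + \<gamma>" shows "\<beta> = 0"
proof (rule ccontr)
  assume b: "\<beta> \<noteq> 0"
  have "0 \<le> \<beta> * (- (\<bar>\<gamma>\<bar> + 1) / \<beta>) + \<gamma>" using assms by blast
  also have "\<beta> * (- (\<bar>\<gamma>\<bar> + 1) / \<beta>) + \<gamma> = \<gamma> - \<bar>\<gamma>\<bar> - 1" using b by (simp add: field_simps)
  finally show False by linarith
qed

lemma quad_zero:
  fixes \<alpha> \<beta> :: real
  assumes "\<forall>t. 0 \<le> \<alpha> * t^2 + \<beta> * t" and "0 \<le> \<alpha>" shows "\<beta> = 0"
proof (rule ccontr)
  assume b: "\<beta> \<noteq> 0"
  define t where "t = - \<beta> / (\<alpha> + 1)"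
  have "0 \<le> \<alpha> * t^2 + \<beta> * t" using assms by blast
  also have "\<alpha> * t^2 + \<beta> * t = - (\<beta>^2) / (\<alpha> + 1)^2"
  proof -
    have ne: "\<alpha> + 1 \<noteq> 0" using assms(2) by linarith
    have "\<alpha> * t^2 + \<beta> * t = (\<alpha> * \<beta>^2 - \<beta>^2 * (\<alpha> + 1)) / (\<alpha> + 1)^2"
      unfolding t_def using ne by (simp add: power_divide diff_divide_distrib power2_eq_square)
    also have "\<dots> = - (\<beta>^2) / (\<alpha> + 1)^2" by (simp add: algebra_simps)
    finally show ?thesis .
  qed
  finally have "0 \<le> - (\<beta>^2) / (\<alpha> + 1)^2" .
  moreover have "0 < \<beta>^2 / (\<alpha> + 1)^2" using b assms(2) by (simp add: divide_pos_pos)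
  ultimately show False by linarith
qed

lemma qf2:
  fixes \<alpha> \<beta> \<gamma> :: real
  assumes "\<forall>x y. 0 \<le> \<alpha> * x^2 + 2 * \<beta> * x * y + \<gamma> * y^2"
  shows "\<beta>^2 \<le> \<alpha> * \<gamma>"
proof -
  have a: "0 \<le> \<alpha>" using assms[rule_format, of 1 0] by simp
  have c: "0 \<le> \<gamma>" using assms[rule_format, of 0 1] by simp
  have 1: "0 \<le> \<alpha> * (\<alpha> * \<gamma> - \<beta>^2)"
  proof -
    have "0 \<le> \<alpha> * \<beta>^2 + 2 * \<beta> * \<beta> * (-\<alpha>) + \<gamma> * (-\<alpha>)^2" using assms by blast
    also have "\<dots> = \<alpha> * (\<alpha> * \<gamma> - \<beta>^2)" by (simp add: algebra_simps power2_eq_square)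
    finally show ?thesis .
  qed
  have 2: "0 \<le> \<gamma> * (\<alpha> * \<gamma> - \<beta>^2)"
  proof -
    have "0 \<le> \<alpha> * \<gamma>^2 + 2 * \<beta> * \<gamma> * (-\<beta>) + \<gamma> * (-\<beta>)^2" using assms by blast
    also have "\<dots> = \<gamma> * (\<alpha> * \<gamma> - \<beta>^2)" by (simp add: algebra_simps power2_eq_square)
    finally show ?thesis .
  qed
  show ?thesis
  proof (cases "\<alpha> > 0 \<or> \<gamma> > 0")
    case True
    then show ?thesis using 1 2 by (meson diff_ge_0_iff_ge zero_le_mult_iff not_le)
  next
    case False
    then have "\<alpha> = 0" "\<gamma> = 0" using a c by auto
    then have "0 \<le> 2 * \<beta> * 1 * (-\<beta>)" using assms[rule_format, of 1 "-\<beta>"] by simp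
    then have "\<beta>^2 \<le> 0" by (simp add: power2_eq_square)
    then show ?thesis using \<open>\<alpha> = 0\<close> by simp
  qed
qed


lemma moment_pos:
  fixes c0 c1 c2 c3 c4 :: real
  assumes nn: "0 \<le> c1" "0 \<le> c2" "0 \<le> c3"
  and c0: "0 < c0"
  and H: "\<forall>x y z. 0 \<le> c0*x^2 + c2*y^2 + c4*z^2 + 2*c1*x*y + 2*c2*x*z + 2*c3*y*z"
  and B: "c2^2 \<le> c1*c3"
  and apos: "0 < c0*c2 - c1^2"
  shows "\<exists>w1 w2 s1 s2 wi. 0\<le>w1 \<and> 0\<le>w2 \<and> 0\<le>s1 \<and> 0\<le>s2 \<and> 0\<le>wi \<and> c0 = w1+w2 \<and>
     c1 = w1*s1+w2*s2 \<and> c2 = w1*s1^2+w2*s2^2 \<and> c3 = w1*s1^3+w2*s2^3 \<and> c4 = w1*s1^4+w2*s2^4+wi"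
proof -
  define a where "a = c0*c2 - c1^2"
  define b where "b = c1*c3 - c2^2"
  define e where "e = c0*c3 - c1*c2"
  define x0 where "x0 = c1/c0"
  have a: "0 < a" using apos a_def by simp
  have b: "0 \<le> b" using B b_def by simp
  have x0: "0 \<le> x0" using nn c0 x0_def by simp
  have c1eq: "c1 = c0 * x0" using c0 x0_def by simp
  have Px0: "c0^2 * (a*x0^2 - e*x0 + b) = - (a^2)"
  proof -
    have "c0^2 * (a*x0^2 - e*x0 + b) = a*c1^2 - e*c0*c1 + b*c0^2"
      unfolding c1eq by (simp add: algebra_simps power2_eq_square)
    also have "\<dots> = - (a^2)" unfolding a_def b_def e_def by (simp add: algebra_simps power2_eq_square)
    finally show ?thesis .
  qed
  have Pneg: "a*x0^2 - e*x0 + b < 0"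
  proof -
    have "c0^2 * (a*x0^2 - e*x0 + b) < 0" using Px0 a by simp
    then show ?thesis using c0 by (simp add: mult_less_0_iff)
  qed
  define D where "D = e^2 - 4*a*b"
  define q where "q = 2*a*x0 - e"
  have Dq: "D = q^2 - 4*a*(a*x0^2 - e*x0 + b)" unfolding D_def q_def by (simp add: algebra_simps power2_eq_square)
  have "a * (a*x0^2 - e*x0 + b) < 0" by (rule mult_pos_neg[OF a Pneg])
  then have Dgt: "q^2 < D" using Dq by linarith
  define sq where "sq = sqrt D"
  have Dpos: "0 < D" using Dgt by (smt (verit) zero_le_power2)
  have sq2: "sq^2 = D" unfolding sq_def using Dpos by simp
  have sqq: "\<bar>q\<bar> < sq" unfolding sq_def using Dgt real_sqrt_less_mono[OF Dgt] by simp
  define s1 where "s1 = (e - sq) / (2*a)"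
  define s2 where "s2 = (e + sq) / (2*a)"
  have s1x: "s1 < x0"
  proof -
    have "x0 - s1 = (q + sq) / (2*a)" unfolding s1_def q_def using a by (simp add: field_simps)
    moreover have "0 < (q + sq) / (2*a)" using sqq a by (simp add: divide_pos_pos abs_less_iff)
    ultimately show ?thesis by linarith
  qed
  have s2x: "x0 < s2"
  proof -
    have "s2 - x0 = (sq - q) / (2*a)" unfolding s2_def q_def using a by (simp add: field_simps)
    moreover have "0 < (sq - q) / (2*a)" using sqq a by (simp add: divide_pos_pos abs_less_iff)
    ultimately show ?thesis by linarith
  qed
  have P1: "a*s1^2 = e*s1 - b"
  proof -
    have "2*a*s1 - e = - sq" unfolding s1_def using a by (simp add: field_simps)
    then have "(2*a*s1 - e)^2 = D" using sq2 by simp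
    then have "4*a*(a*s1^2 - e*s1 + b) = 0" unfolding D_def by (simp add: algebra_simps power2_eq_square)
    then show ?thesis using a by simp
  qed
  have P2: "a*s2^2 = e*s2 - b"
  proof -
    have "2*a*s2 - e = sq" unfolding s2_def using a by (simp add: field_simps)
    then have "(2*a*s2 - e)^2 = D" using sq2 by simp
    then have "4*a*(a*s2^2 - e*s2 + b) = 0" unfolding D_def by (simp add: algebra_simps power2_eq_square)
    then show ?thesis using a by simp
  qed
  have prod: "a * (s1 * s2) = b"
  proof -
    have "4*a^2*(s1*s2) = (e - sq)*(e + sq)" unfolding s1_def s2_def using a by (simp add: field_simps power2_eq_square)
    also have "\<dots> = e^2 - sq^2" by (simp add: algebra_simps power2_eq_square)
    also have "\<dots> = 4*a*b" using sq2 D_def by simp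
    finally have "4*a*(a*(s1*s2)) = 4*a*b" by (simp add: power2_eq_square algebra_simps)
    then show ?thesis using a by simp
  qed
  have s2pos: "0 < s2" using s2x x0 by linarith
  have s1nn: "0 \<le> s1"
  proof -
    have "0 \<le> s1 * s2" using prod a b by (metis mult_pos_pos linorder_not_less mult_le_0_iff not_less_iff_gr_or_eq zero_le_mult_iff)
    then show ?thesis using s2pos by (simp add: zero_le_mult_iff)
  qed
  have dpos: "0 < s2 - s1" using s1x s2x by linarith
  define w1 where "w1 = (c0*s2 - c1)/(s2 - s1)"
  define w2 where "w2 = (c1 - c0*s1)/(s2 - s1)"
  have w1: "0 \<le> w1" unfolding w1_def using dpos c1eq s2x c0
    by (intro divide_nonneg_pos) (auto simp: algebra_simps)
  have w2: "0 \<le> w2" unfolding w2_def using dpos c1eq s1x c0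
    by (intro divide_nonneg_pos) (auto simp: algebra_simps)
  have M0: "c0 = w1 + w2"
  proof -
    have "w1 + w2 = (c0*(s2 - s1))/(s2 - s1)" unfolding w1_def w2_def
      by (simp add: add_divide_distrib[symmetric] algebra_simps)
    then show ?thesis using dpos by simp
  qed
  have M1: "c1 = w1*s1 + w2*s2"
  proof -
    have "w1*s1 + w2*s2 = (c1*(s2 - s1))/(s2 - s1)" unfolding w1_def w2_def
      by (simp add: times_divide_eq_left add_divide_distrib[symmetric] algebra_simps)
    then show ?thesis using dpos by simp
  qed
  have rec: "a*(w1*s1^(n+2) + w2*s2^(n+2)) = e*(w1*s1^(n+1) + w2*s2^(n+1)) - b*(w1*s1^n + w2*s2^n)" for n
  proof -
    have "a*(w1*s1^(n+2) + w2*s2^(n+2)) = w1*s1^n*(a*s1^2) + w2*s2^n*(a*s2^2)"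
      by (simp add: algebra_simps power_add power2_eq_square)
    also have "\<dots> = e*(w1*s1^(n+1) + w2*s2^(n+1)) - b*(w1*s1^n + w2*s2^n)"
      unfolding P1 P2 by (simp add: algebra_simps)
    finally show ?thesis .
  qed
  have M2: "c2 = w1*s1^2 + w2*s2^2"
  proof -
    have "a*(w1*s1^2 + w2*s2^2) = e*c1 - b*c0" using rec[of 0] M0 M1 by (simp add: power2_eq_square)
    also have "\<dots> = a*c2" unfolding a_def b_def e_def by (simp add: algebra_simps power2_eq_square)
    finally show ?thesis using a by simp
  qed
  have M3: "c3 = w1*s1^3 + w2*s2^3"
  proof -
    have "a*(w1*s1^3 + w2*s2^3) = e*c2 - b*c1" using rec[of 1] M2 M1 by (simp add: power2_eq_square power3_eq_cube mult.assoc)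
    also have "\<dots> = a*c3" unfolding a_def b_def e_def by (simp add: algebra_simps power2_eq_square)
    finally show ?thesis using a by simp
  qed
  have M4: "a*(w1*s1^4 + w2*s2^4) = e*c3 - b*c2" using rec[of 2] M2 M3 by (simp add: power2_eq_square power3_eq_cube mult.assoc)
  define wi where "wi = c4 - (w1*s1^4 + w2*s2^4)"
  have det: "0 \<le> a*c4 - e*c3 + b*c2"
  proof -
    have "0 \<le> c0*b^2 + c2*(-e)^2 + c4*a^2 + 2*c1*b*(-e) + 2*c2*b*a + 2*c3*(-e)*a" using H by blast
    also have "\<dots> = a * (a*c4 - e*c3 + b*c2)" unfolding a_def b_def e_def by (simp add: algebra_simps power2_eq_square)
    finally show ?thesis using a by (simp add: zero_le_mult_iff)
  qed
  have wi: "0 \<le> wi"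
  proof -
    have "a * wi = a*c4 - e*c3 + b*c2" unfolding wi_def using M4 by (simp add: algebra_simps)
    then show ?thesis using det a by (metis zero_le_mult_iff linorder_not_le)
  qed
  show ?thesis
    by (rule exI[of _ w1], rule exI[of _ w2], rule exI[of _ s1], rule exI[of _ s2], rule exI[of _ wi])
      (use w1 w2 s1nn s2pos wi M0 M1 M2 M3 in \<open>auto simp: wi_def\<close>)
qed


lemma moment:
  fixes c0 c1 c2 c3 c4 :: real
  assumes nn: "0 \<le> c0" "0 \<le> c1" "0 \<le> c2" "0 \<le> c3" "0 \<le> c4"
  and H: "\<forall>x y z. 0 \<le> c0*x^2 + c2*y^2 + c4*z^2 + 2*c1*x*y + 2*c2*x*z + 2*c3*y*z"
  and B: "c2^2 \<le> c1*c3"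
  shows "\<exists>w1 w2 s1 s2 wi. 0\<le>w1 \<and> 0\<le>w2 \<and> 0\<le>s1 \<and> 0\<le>s2 \<and> 0\<le>wi \<and> c0 = w1+w2 \<and>
     c1 = w1*s1+w2*s2 \<and> c2 = w1*s1^2+w2*s2^2 \<and> c3 = w1*s1^3+w2*s2^3 \<and> c4 = w1*s1^4+w2*s2^4+wi"
proof (cases "c0 = 0")
  case True
  have "2*c1 = 0"
  proof (rule lin_zero)
    show "\<forall>t. 0 \<le> (2*c1) * t + c2"
    proof
      fix t show "0 \<le> (2*c1) * t + c2" using H[rule_format, of t 1 0] True by simp
    qed
  qed
  then have z1: "c1 = 0" by simp
  have "2*c2 = 0"
  proof (rule lin_zero)
    show "\<forall>t. 0 \<le> (2*c2) * t + c4"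
    proof
      fix t show "0 \<le> (2*c2) * t + c4" using H[rule_format, of t 0 1] True by simp
    qed
  qed
  then have z2: "c2 = 0" by simp
  have "2*c3 = 0"
  proof (rule lin_zero)
    show "\<forall>t. 0 \<le> (2*c3) * t + c4"
    proof
      fix t show "0 \<le> (2*c3) * t + c4" using H[rule_format, of 0 t 1] True z2 by simp
    qed
  qed
  then have z3: "c3 = 0" by simp
  show ?thesis
    by (rule exI[of _ 0], rule exI[of _ 0], rule exI[of _ 0], rule exI[of _ 0], rule exI[of _ c4])
      (use True z1 z2 z3 nn in simp)
next
  case False
  then have c0: "0 < c0" using nn by simp
  have anng: "0 \<le> c0 * (c0*c2 - c1^2)"
  proof -
    have "0 \<le> c0*c1^2 + c2*(-c0)^2 + c4*0^2 + 2*c1*c1*(-c0) + 2*c2*c1*0 + 2*c3*(-c0)*0" using H by blast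
    also have "\<dots> = c0 * (c0*c2 - c1^2)" by (simp add: algebra_simps power2_eq_square)
    finally show ?thesis .
  qed
  then have ann: "0 \<le> c0*c2 - c1^2" using c0 by (simp add: zero_le_mult_iff)
  show ?thesis
  proof (cases "c0*c2 - c1^2 = 0")
    case False
    then have "0 < c0*c2 - c1^2" using ann by simp
    then show ?thesis using moment_pos[OF nn(2,3,4) c0 H B] by blast
  next
    case True
    define k where "k = c1*c2 - c0*c3"
    have k0: "k = 0"
    proof -
      have "2*k = 0"
      proof (rule quad_zero)
        show "0 \<le> c4" by (rule nn)
        show "\<forall>t. 0 \<le> c4 * t^2 + (2*k) * t"
        proof
          fix t
          have "0 \<le> c0*c1^2 + c2*(-c0)^2 + c4*t^2 + 2*c1*c1*(-c0) + 2*c2*c1*t + 2*c3*(-c0)*t" using H by blast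
          also have "\<dots> = c0 * (c0*c2 - c1^2) + c4 * t^2 + (2*k) * t"
            unfolding k_def by (simp add: algebra_simps power2_eq_square)
          finally show "0 \<le> c4 * t^2 + (2*k) * t" using True by simp
        qed
      qed
      then show ?thesis by simp
    qed
    define m where "m = c1 / c0"
    have e1: "c1 = c0 * m" unfolding m_def using c0 by simp
    have e2: "c2 = c0 * m^2"
    proof -
      have "c0 * c2 = c0 * (c0 * m^2)" using True e1 by (simp add: power2_eq_square algebra_simps)
      then show ?thesis using c0 by simp
    qed
    have e3: "c3 = c0 * m^3"
    proof -
      have "c0 * c3 = c1 * c2" using k0 k_def by simp
      also have "\<dots> = c0 * (c0 * m^3)" unfolding e1 e2 by (simp add: power2_eq_square power3_eq_cube mult_ac)
      finally show ?thesis using c0 by simp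
    qed
    have m0: "0 \<le> m" unfolding m_def using c0 nn by simp
    define wi where "wi = c4 - c0 * m^4"
    have wi: "0 \<le> wi"
    proof -
      have "0 \<le> c0*0^2 + c2*c1^2 + c4*(-c0)^2 + 2*c1*0*c1 + 2*c2*0*(-c0) + 2*c3*c1*(-c0)" using H by blast
      also have "\<dots> = c0^2 * wi" unfolding wi_def e1 e2 e3 by (simp add: algebra_simps power2_eq_square power3_eq_cube power4_eq_xxxx)
      finally show ?thesis using c0 by (simp add: zero_le_mult_iff)
    qed
    show ?thesis
      by (rule exI[of _ c0], rule exI[of _ 0], rule exI[of _ m], rule exI[of _ 0], rule exI[of _ wi])
        (use c0 m0 wi e1 e2 e3 in \<open>simp add: wi_def\<close>)
  qed
qed


theorem corollary1:
  fixes p :: "3 \<Rightarrow> 3 \<Rightarrow> real" and \<alpha> :: complex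
  assumes "\<forall>(i, j)\<in>upper_pairs. 0 \<le> p i j"
    and "(\<Sum>(i, j)\<in>upper_pairs. p i j) = 1"
    and "p 1 1 = 2 * p 0 2"
    and "complex_of_real (p 1 1) = complex_of_real (sqrt 2) * \<alpha>"
    and "is_state (rhoS p \<alpha>)"
  shows "separable (rhoS p \<alpha>) \<longleftrightarrow> PPT (rhoS p \<alpha>)"
proof
  assume "separable (rhoS p \<alpha>)"
  then show "PPT (rhoS p \<alpha>)" by (rule ppt_of_sep)
next
  assume ppt: "PPT (rhoS p \<alpha>)"
  have A3: "p 1 1 = 2 * p 0 2" by (rule assms(3))
  have A4: "\<alpha> = complex_of_real (sqrt 2 * p 0 2)"
  proof -
    have "complex_of_real (sqrt 2) * \<alpha> = complex_of_real (sqrt 2) * complex_of_real (sqrt 2 * p 0 2)"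
      using assms(4) A3 by (simp flip: of_real_mult add: mult.assoc[symmetric])
    then show ?thesis by simp
  qed
  have psdPT: "psd (partial_transpose (rhoS p \<alpha>))" using ppt unfolding PPT_def .
  have nn: "0 \<le> cc p 0" "0 \<le> cc p 1" "0 \<le> cc p 2" "0 \<le> cc p 3" "0 \<le> cc p 4"
    using assms(1) by (auto simp: cc_def upper_pairs_def)
  have H: "\<forall>x y z. 0 \<le> cc p 0*x^2 + cc p 2*y^2 + cc p 4*z^2 + 2*cc p 1*x*y + 2*cc p 2*x*z + 2*cc p 3*y*z"
    using qfH[OF A3 A4 psdPT] by blast
  have B: "(cc p 2)^2 \<le> cc p 1 * cc p 3"
  proof (rule qf2)
    show "\<forall>x y. 0 \<le> cc p 1 * x\<^sup>2 + 2 * cc p 2 * x * y + cc p 3 * y\<^sup>2"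
      using qfB[OF A3 A4 psdPT] by blast
  qed
  obtain w1 w2 s1 s2 wi where W: "0\<le>w1" "0\<le>w2" "0\<le>s1" "0\<le>s2" "0\<le>wi" and
    M: "cc p 0 = w1+w2" "cc p 1 = w1*s1+w2*s2" "cc p 2 = w1*s1^2+w2*s2^2" "cc p 3 = w1*s1^3+w2*s2^3"
       "cc p 4 = w1*s1^4+w2*s2^4+wi"
    using moment[OF nn H B] by blast
  have mom: "cc p n = w1 * s1^n + w2 * s2^n + (if n = 4 then wi else 0)" if "n \<le> 4" for n
  proof -
    have "n = 0 \<or> n = 1 \<or> n = 2 \<or> n = 3 \<or> n = 4" using that by auto
    then show ?thesis using M by auto
  qed
  have sq: "(sqrt s)^(2*n) = s^n" if "0 \<le> s" for s :: real and n
    using that by (simp add: power_mult)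
  have eq: "rhoS p \<alpha> = (\<lambda>x y. (complex_of_real w1 * G (sqrt s1) x y + complex_of_real w2 * G (sqrt s2) x y)
      + complex_of_real wi * prod_state e2 e2 x y)"
  proof (intro ext)
    fix x y :: "3 \<times> 3"
    obtain a b c d where xy: "x = (a,b)" "y = (c,d)" by (cases x, cases y) auto
    show "rhoS p \<alpha> x y = (complex_of_real w1 * G (sqrt s1) x y + complex_of_real w2 * G (sqrt s2) x y)
      + complex_of_real wi * prod_state e2 e2 x y"
    proof (cases "sig x = sig y")
      case False
      then show ?thesis unfolding xy by (simp add: rho_formula[OF A3 A4] G_def E22_formula)
    next
      case True
      have le: "sig x \<le> 4" by (rule sig_le)
      have "rhoS p \<alpha> x y = complex_of_real (gw x * gw y * cc p (sig x))"
        unfolding xy using True xy by (simp add: rho_formula[OF A3 A4])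
      also have "\<dots> = complex_of_real (w1 * (gw x * gw y * s1 ^ sig x) + w2 * (gw x * gw y * s2 ^ sig x)
          + wi * (if sig x = 4 then gw x * gw y else 0))"
        unfolding mom[OF le] by (simp add: algebra_simps)
      also have "\<dots> = (complex_of_real w1 * G (sqrt s1) x y + complex_of_real w2 * G (sqrt s2) x y)
          + complex_of_real wi * prod_state e2 e2 x y"
        using True unfolding xy by (simp add: G_def E22_formula sq W)
      finally show ?thesis .
    qed
  qed
  have sG: "sepc (G r)" for r
  proof -
    have "G r = (\<lambda>x y. \<Sum>k<8. complex_of_real (1/8) * prod_state (vk r k) (vk r k) x y)"
      by (intro ext) (rule G_eq)
    moreover have "sepc (\<lambda>x y. \<Sum>k<8. complex_of_real ((\<lambda>_. 1/8) k) * prod_state (vk r k) (vk r k) x y)"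
      by (rule sepc_sum) simp
    ultimately show ?thesis by simp
  qed
  have sE: "sepc (prod_state e2 e2)"
    using sepc_sum[of 1 "\<lambda>_. 1" "\<lambda>_. e2" "\<lambda>_. e2"] by simp
  have "sepc (rhoS p \<alpha>)"
    unfolding eq
    by (intro sepc_add sepc_scale sG sE W)
  then show "separable (rhoS p \<alpha>)" using assms(5) sep_of_sepc by blast
qed

end
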